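(* Any $1$-consistent algorithm for the $\{0,1\}$-speed SSP problem has robustness at least $\frac{2(m-1)}{m}$, where $m$ is the total number of machines.
   Context: $\{0,1\}$-speed SSP: there are $n$ jobs with processing times $p_1,\dots,p_n\ge0$ and $m$ machines, each of speed $0$ (unavailable) or $1$ (available). In the partitioning stage the algorithm knows $\mathbf p$, $m$ and a prediction $\hat m$ of the number of available machines, and partitions the jobs into $m$ possibly empty bags. In the scheduling stage the actual number $m_0\ge1$ of available machines is revealed and each bag is assigned whole to one of the $m_0$ identical unit-speed machines; the makespan is the maximum total processing time on a machine. $opt(\mathbf p,x)$ is the minimum makespan of scheduling the individual jobs on $x$ identical unit-speed machines; $alg(\mathbf p,\hat m,m_0)$ is the algorithm's makespan. An algorithm is $1$-consistent if $alg(\mathbf p,m_0,m_0)\le opt(\mathbf p,m_0)$ for all $\mathbf p,m_0$; its robustness is $\sup_{\mathbf p,\hat m,m_0} alg(\mathbf p,\hat m,m_0)/opt(\mathbf p,m_0)$. *)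

theory Defs
  imports "HOL-Library.Extended_Real" Complex_Main
begin

text \<open>Jobs are given as a list p of processing times (job j has time p!j, j < length p).
  An assignment of jobs to x machines is a function f with f j < x for all jobs j.\<close>

definition load :: "real list \<Rightarrow> (nat \<Rightarrow> nat) \<Rightarrow> nat \<Rightarrow> real" where
  "load p f i = (\<Sum>j<length p. if f j = i then p ! j else 0)"

definition makespan :: "real list \<Rightarrow> nat \<Rightarrow> (nat \<Rightarrow> nat) \<Rightarrow> real" where
  "makespan p x f = Max (load p f ` {..<x})"

definition opt :: "real list \<Rightarrow> nat \<Rightarrow> real" where
  "opt p x = Min {makespan p x f | f. \<forall>j<length p. f j < x}"

text \<open>An algorithm for {0,1}-speed SSP with m machines is a pair (A, S):
  A p mh j is the bag (in {0..<m}) of job j, given the jobs p and the prediction mh;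
  S p mh m0 b is the machine (in {0..<m0}) to which bag b is assigned once m0 is revealed.\<close>
definition valid_alg ::
  "nat \<Rightarrow> (real list \<Rightarrow> nat \<Rightarrow> nat \<Rightarrow> nat) \<Rightarrow> (real list \<Rightarrow> nat \<Rightarrow> nat \<Rightarrow> nat \<Rightarrow> nat) \<Rightarrow> bool" where
  "valid_alg m A S \<longleftrightarrow>
     (\<forall>p mh. (\<forall>x\<in>set p. x \<ge> 0) \<and> mh \<in> {1..m} \<longrightarrow>
        (\<forall>j<length p. A p mh j < m) \<and>
        (\<forall>m0\<in>{1..m}. \<forall>b<m. S p mh m0 b < m0))"

definition alg ::
  "(real list \<Rightarrow> nat \<Rightarrow> nat \<Rightarrow> nat) \<Rightarrow> (real list \<Rightarrow> nat \<Rightarrow> nat \<Rightarrow> nat \<Rightarrow> nat) \<Rightarrow>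
   real list \<Rightarrow> nat \<Rightarrow> nat \<Rightarrow> real" where
  "alg A S p mh m0 = makespan p m0 (\<lambda>j. S p mh m0 (A p mh j))"

definition one_consistent ::
  "nat \<Rightarrow> (real list \<Rightarrow> nat \<Rightarrow> nat \<Rightarrow> nat) \<Rightarrow> (real list \<Rightarrow> nat \<Rightarrow> nat \<Rightarrow> nat \<Rightarrow> nat) \<Rightarrow> bool" where
  "one_consistent m A S \<longleftrightarrow>
     (\<forall>p m0. (\<forall>x\<in>set p. x \<ge> 0) \<and> m0 \<in> {1..m} \<longrightarrow> alg A S p m0 m0 \<le> opt p m0)"

text \<open>Robustness: sup of alg/opt over all instances (the only instances with opt = 0 are
  all-zero ones, where alg = 0 as well; there the ratio is 0 by the HOL convention x/0 = 0).\<close>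
definition robustness ::
  "nat \<Rightarrow> (real list \<Rightarrow> nat \<Rightarrow> nat \<Rightarrow> nat) \<Rightarrow> (real list \<Rightarrow> nat \<Rightarrow> nat \<Rightarrow> nat \<Rightarrow> nat) \<Rightarrow> ereal" where
  "robustness m A S =
     (SUP (p, mh, m0) \<in> {(p, mh, m0). (\<forall>x\<in>set p. x \<ge> 0) \<and> mh \<in> {1..m} \<and> m0 \<in> {1..m}}.
        ereal (alg A S p mh m0 / opt p m0))"

end

theory Submission
  imports Defs "HOL-Library.FuncSet"
begin

lemma cnt: "(\<Sum>j<(n::nat). if P j then 1 else 0 :: real) = real (card {j\<in>{..<n}. P j})"
  by (simp add: sum.If_cases Int_def)

lemma divcnt: assumes "k>0" shows "card {j\<in>{..<n}. j div k = (i::nat)} \<le> k"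
proof -
  have "{j\<in>{..<n}. j div k = i} \<subseteq> {i*k..<i*k+k}"
  proof
    fix j assume "j \<in> {j\<in>{..<n}. j div k = i}"
    then have "j div k = i" by simp
    then have e: "i*k + j mod k = j" using mult_div_mod_eq[of k j] by (simp add: mult.commute)
    have "j mod k < k" using assms by simp
    then show "j \<in> {i*k..<i*k+k}" unfolding atLeastLessThan_iff using e by linarith
  qed
  then have "card {j\<in>{..<n}. j div k = i} \<le> card {i*k..<i*k+k}" by (intro card_mono) auto
  then show ?thesis by simp
qed

lemma load_rep: "load (replicate n 1) f i = (\<Sum>j<n. if f j = i then 1 else 0)"
  unfolding load_def by (intro sum.cong) auto

lemma makespan_ge: "i < x \<Longrightarrow> load p f i \<le> makespan p x f"
  unfolding makespan_def by (intro Max_ge) auto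

lemma makespan_le: "x \<ge> 1 \<Longrightarrow> (\<forall>i<x. load p f i \<le> c) \<Longrightarrow> makespan p x f \<le> c"
  unfolding makespan_def by (subst Max_le_iff) (auto simp: lessThan_empty_iff)

lemma finite_ms: "finite {makespan p x f | f. \<forall>j<length p. f j < x}"
proof -
  have "{makespan p x f | f. \<forall>j<length p. f j < x} \<subseteq>
        (\<lambda>g. makespan p x g) ` ({..<length p} \<rightarrow>\<^sub>E {..<x})"
  proof
    fix y assume "y \<in> {makespan p x f | f. \<forall>j<length p. f j < x}"
    then obtain f where f: "\<forall>j<length p. f j < x" "y = makespan p x f" by auto
    have "load p f = load p (restrict f {..<length p})"
      unfolding load_def by (intro ext sum.cong) auto
    then have "y = makespan p x (restrict f {..<length p})"
      using f unfolding makespan_def by simp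
    moreover have "restrict f {..<length p} \<in> {..<length p} \<rightarrow>\<^sub>E {..<x}" using f by auto
    ultimately show "y \<in> (\<lambda>g. makespan p x g) ` ({..<length p} \<rightarrow>\<^sub>E {..<x})" by blast
  qed
  then show ?thesis by (rule finite_subset) (intro finite_imageI finite_PiE; simp)
qed

lemma opt_le: "\<forall>j<length p. f j < x \<Longrightarrow> opt p x \<le> makespan p x f"
  unfolding opt_def by (intro Min_le finite_ms) auto

lemma opt_in: "x \<ge> 1 \<Longrightarrow> \<exists>f. (\<forall>j<length p. f j < x) \<and> opt p x = makespan p x f"
proof -
  assume "x \<ge> 1"
  then have "makespan p x (\<lambda>_. 0) \<in> {makespan p x f | f. \<forall>j<length p. f j < x}" by auto
  then have ne: "{makespan p x f | f. \<forall>j<length p. f j < x} \<noteq> {}" by blast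
  have "opt p x \<in> {makespan p x f | f. \<forall>j<length p. f j < x}"
    unfolding opt_def by (rule Min_in[OF finite_ms ne])
  then show ?thesis by auto
qed

lemma opt_rep_le: assumes "k > 0" "x \<ge> 1" "n \<le> x * k"
  shows "opt (replicate n 1) x \<le> real k"
proof -
  have "opt (replicate n 1) x \<le> makespan (replicate n 1) x (\<lambda>j. j div k)"
    using assms by (intro opt_le) (auto simp: less_mult_imp_div_less)
  also have "\<dots> \<le> real k"
  proof (rule makespan_le[OF assms(2)], intro allI impI)
    fix i assume "i < x"
    show "load (replicate n 1) (\<lambda>j. j div k) i \<le> real k"
      unfolding load_rep cnt using divcnt[OF assms(1)] by simp
  qed
  finally show ?thesis .
qed

lemma opt_rep_pos: assumes "n \<ge> 1" "x \<ge> 1" shows "opt (replicate n 1) x \<ge> 1"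
proof -
  obtain f where f: "\<forall>j<n. f j < x" "opt (replicate n 1) x = makespan (replicate n 1) x f"
    using opt_in[OF assms(2), of "replicate n 1"] by auto
  have "1 \<le> load (replicate n 1) f (f 0)"
  proof -
    have "load (replicate n 1) f (f 0) = real (card {j\<in>{..<n}. f j = f 0})"
      unfolding load_rep cnt ..
    moreover have "card {j\<in>{..<n}. f j = f 0} \<ge> 1"
      proof -
      have "0 \<in> {j\<in>{..<n}. f j = f 0}" using assms(1) by simp
      then have "card {j\<in>{..<n}. f j = f 0} > 0" by (auto simp: card_gt_0_iff)
      then show ?thesis by simp
    qed
    ultimately show ?thesis by simp
  qed
  also have "\<dots> \<le> makespan (replicate n 1) x f" using f assms by (intro makespan_ge) auto
  finally show ?thesis using f by simp
qed

theorem lemma18: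
  fixes m :: nat
    and A :: "real list \<Rightarrow> nat \<Rightarrow> nat \<Rightarrow> nat"
    and S :: "real list \<Rightarrow> nat \<Rightarrow> nat \<Rightarrow> nat \<Rightarrow> nat"
  assumes "m \<ge> 1"
    and "valid_alg m A S"
    and "one_consistent m A S"
  shows "robustness m A S \<ge> ereal (2 * (real m - 1) / real m)"

proof (cases "m = 1")
  case True
  let ?p = "replicate 1 (1::real)"
  have mem: "(?p, 1, 1) \<in> {(p, mh, m0). (\<forall>x\<in>set p. x \<ge> 0) \<and> mh \<in> {1..m} \<and> m0 \<in> {1..m}}"
    using True by auto
  have "0 \<le> load ?p (\<lambda>j. S ?p 1 1 (A ?p 1 j)) 0" unfolding load_def by (intro sum_nonneg) auto
  also have "\<dots> \<le> alg A S ?p 1 1" unfolding alg_def by (intro makespan_ge) auto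
  finally have "0 \<le> alg A S ?p 1 1" .
  moreover have "opt ?p 1 \<ge> 1" using opt_rep_pos[of 1 1] by simp
  ultimately have "0 \<le> alg A S ?p 1 1 / opt ?p 1" by simp
  then have "ereal 0 \<le> ereal (alg A S ?p 1 1 / opt ?p 1)" by simp
  also have "\<dots> \<le> robustness m A S" unfolding robustness_def
    by (rule SUP_upper2[OF mem]) simp
  finally show ?thesis using True by simp
next
  case False
  then have m2: "m \<ge> 2" using assms(1) by simp
  define n where "n = m * (m - 1)"
  define p where "p = replicate n (1::real)"
  define A' where "A' = A p m"
  define T where "T = S p m m"
  define S' where "S' = S p m (m - 1)"
  have hp: "\<forall>x\<in>set p. x \<ge> 0" unfolding p_def by simp
  have lp: "length p = n" unfolding p_def by simp
  have hA: "\<forall>j<n. A' j < m" using assms(2) hp m2 lp unfolding valid_alg_def A'_def by auto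
  have hT: "\<forall>b<m. T b < m" using assms(2) hp m2 unfolding valid_alg_def T_def by auto
  have hS: "\<forall>b<m. S' b < m - 1" using assms(2) hp m2 unfolding valid_alg_def S'_def by auto
  have "alg A S p m m \<le> opt p m" using assms(3) hp m2 unfolding one_consistent_def by auto
  also have "opt p m \<le> real (m - 1)" unfolding p_def n_def using m2 by (intro opt_rep_le) auto
  finally have c1: "alg A S p m m \<le> real (m - 1)" .
  have ml: "load p (\<lambda>j. T (A' j)) i \<le> real (m - 1)" if "i < m" for i
    using makespan_ge[OF that, of p "\<lambda>j. T (A' j)"] c1 unfolding alg_def A'_def T_def by simp
  have bl: "load p A' b \<le> real (m - 1)" if "b < m" for b
  proof -
    have "load p A' b \<le> load p (\<lambda>j. T (A' j)) (T b)"
      unfolding p_def load_rep by (intro sum_mono) auto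
    also have "\<dots> \<le> real (m - 1)" using ml hT that by auto
    finally show ?thesis .
  qed
  have sumbl: "(\<Sum>b<m. load p A' b) = real n"
  proof -
    have "(\<Sum>b<m. load p A' b) = (\<Sum>b<m. \<Sum>j<n. if A' j = b then 1 else 0)"
      unfolding p_def load_rep ..
    also have "\<dots> = (\<Sum>j<n. \<Sum>b<m. if A' j = b then 1 else 0)" by (rule sum.swap)
    also have "\<dots> = (\<Sum>j<n. (1::real))" using hA by (intro sum.cong) auto
    finally show ?thesis by simp
  qed
  have beq: "load p A' b = real (m - 1)" if "b < m" for b
  proof (rule ccontr)
    assume "load p A' b \<noteq> real (m - 1)"
    then have "load p A' b < real (m - 1)" using bl[OF that] by simp
    then have "(\<Sum>b<m. load p A' b) < (\<Sum>b<m. real (m - 1))"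
      using bl that by (intro sum_strict_mono_ex1) auto
    then show False using sumbl m2 unfolding n_def by (simp add: of_nat_diff)
  qed
  have "\<not> inj_on S' {..<m}"
  proof
    assume "inj_on S' {..<m}"
    then have "card {..<m} \<le> card {..<m - 1}"
      by (rule card_inj_on_le) (use hS in auto)
    then show False using m2 by simp
  qed
  then obtain b1 b2 where b: "b1 < m" "b2 < m" "b1 \<noteq> b2" "S' b1 = S' b2"
    unfolding inj_on_def by auto
  have "2 * real (m - 1) = load p A' b1 + load p A' b2" using beq b by simp
  also have "\<dots> \<le> load p (\<lambda>j. S' (A' j)) (S' b1)"
    unfolding p_def load_rep sum.distrib[symmetric] using b by (intro sum_mono) auto
  also have "\<dots> \<le> alg A S p m (m - 1)"
    unfolding alg_def A'_def S'_def using hS b by (intro makespan_ge) (auto simp: S'_def)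
  finally have a2: "2 * real (m - 1) \<le> alg A S p m (m - 1)" .
  have o1: "opt p (m - 1) \<le> real m" unfolding p_def n_def using m2
    by (intro opt_rep_le) (auto simp: mult.commute)
  have o2: "opt p (m - 1) \<ge> 1" unfolding p_def n_def using m2 by (intro opt_rep_pos) auto
  have "2 * (real m - 1) / real m \<le> alg A S p m (m - 1) / real m"
    using a2 m2 by (intro divide_right_mono) (auto simp: of_nat_diff)
  also have "\<dots> \<le> alg A S p m (m - 1) / opt p (m - 1)"
    using a2 o1 o2 by (intro divide_left_mono) auto
  finally have r: "2 * (real m - 1) / real m \<le> alg A S p m (m - 1) / opt p (m - 1)" .
  have mem: "(p, m, m - 1) \<in> {(p, mh, m0). (\<forall>x\<in>set p. x \<ge> 0) \<and> mh \<in> {1..m} \<and> m0 \<in> {1..m}}"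
    using hp m2 by auto
  have "ereal (2 * (real m - 1) / real m) \<le> ereal (alg A S p m (m - 1) / opt p (m - 1))"
    using r by simp
  also have "\<dots> \<le> robustness m A S" unfolding robustness_def
    by (rule SUP_upper2[OF mem]) simp
  finally show ?thesis .
qed

end
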